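(* Let $\succeq$ be a complete and transitive preference relation on $\mathcal{L}$ that is continuous with respect to convergence in probability, satisfies state-wise monotonicity, and is regret based. Then (i) $\succeq$ is monotonic with respect to first-order stochastic dominance: for $X,Y\in\mathcal{L}$, if $F_X$ strictly dominates $F_Y$ by first-order stochastic dominance (i.e., $F_X(t)\leqslant F_Y(t)$ for all $t$ and $F_X\neq F_Y$), then $X\succ Y$; and (ii) $\succeq$ is continuous with respect to convergence in distribution: whenever $X^k,X,Y\in\mathcal{L}$ and $X^k\to X$ in distribution, $X^k\succeq Y$ for all $k$ implies $X\succeq Y$, and $Y\succeq X^k$ for all $k$ implies $Y\succeq X$.
   Context: Fix a bounded interval of outcomes $[\underline x,\bar x]\subset\mathbb{R}$. Let $(S,\Sigma,\mathrm{P})$ be the probability space with $S=[0,1]$, $\Sigma$ the Borel $\sigma$-algebra on $[0,1]$, and $\mathrm{P}$ Lebesgue measure. $\mathcal{L}$ is the set of measurable random variables $X:S\to[\underline x,\bar x]$ taking only finitely many values; such $X$ is written $X=(x_1,S_1;\ldots;x_n,S_n)$, meaning $X=x_i$ on the event $S_i$, where $S_1,\ldots,S_n$ is a measurable partition of $S$. $F_X$ denotes the cdf of $X$. A preference relation $\succeq$ on $\mathcal{L}$ is a binary relation; $\succ$ and $\sim$ are its strict and indifference parts. A regret function is a continuous $\psi:[\underline x,\bar x]\times[\underline x,\bar x]\to\mathbb{R}$ with $\psi(x,x)=0$ for all $x$, $\psi(x,y)$ strictly increasing in $x$ and strictly decreasing in $y$. For $X=(x_1,S_1;\ldots;x_n,S_n)$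 and $Y=(y_1,S_1;\ldots;y_n,S_n)$ written on a common partition, the regret lottery is the finite-support lottery $\Psi(X,Y)=(\psi(x_1,y_1),p_1;\ldots;\psi(x_n,y_n),p_n)$ with $p_i=\mathrm{P}(S_i)$ (i.e., the distribution of $s\mapsto\psi(X(s),Y(s))$). The relation $\succeq$ is regret based if there exist a regret function $\psi$ and a continuous real-valued functional $V$ defined on the set of regret lotteries $\{\Psi(X,Y):X,Y\in\mathcal{L}\}$ such that for all $X,Y\in\mathcal{L}$: $X\succeq Y$ iff $V(\Psi(X,Y))\geqslant 0$. A sequence $X^k\in\mathcal{L}$ converges in probability to $X\in\mathcal{L}$ if for every $\varepsilon>0$, $\lim_{k\to\infty}\mathrm{P}(|X^k-X|\geqslant\varepsilon)=0$. $\succeq$ is continuous with respect to convergence in probability if, whenever $X^k\to X$ in probability: $X^k\succeq Y$ for all $k$ implies $X\succeq Y$, and $Y\succeq X^k$ for all $k$ implies $Y\succeq X$. $X^k$ converges in distribution to $X$ if $\lim_{k\to\infty}F_{X^k}(x)=F_X(x)$ at every $x$ at which $F_X$ is continuous. $\succeq$ satisfies state-wise monotonicity if for any measurable partition $S_1,\ldots,S_n$ of $S$ and any $X=(x_1,S_1;\ldots;x_n,S_n)$, $Y=(y_1,S_1;\ldots;y_n,S_n)$ with $x_i\geqslant y_i$ for all $i$ and at least one strict inequality, $X\succ Y$. *)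

theory Defs
  imports "HOL-Probability.Probability"
begin

definition PS :: "real measure" where
  "PS = restrict_space lborel {0..1}"

definition simpleL :: "real \<Rightarrow> real \<Rightarrow> (real \<Rightarrow> real) set" where
  "simpleL xl xu = {X. X \<in> borel_measurable PS \<and> X ` space PS \<subseteq> {xl..xu}
                        \<and> finite (X ` space PS)}"

definition law :: "(real \<Rightarrow> real) \<Rightarrow> real measure" where
  "law X = distr PS borel X"

definition strict_pref :: "('a \<Rightarrow> 'a \<Rightarrow> bool) \<Rightarrow> 'a \<Rightarrow> 'a \<Rightarrow> bool" where
  "strict_pref R X Y \<longleftrightarrow> R X Y \<and> \<not> R Y X"

definition complete_on :: "'a set \<Rightarrow> ('a \<Rightarrow> 'a \<Rightarrow> bool) \<Rightarrow> bool" where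
  "complete_on A R \<longleftrightarrow> (\<forall>X\<in>A. \<forall>Y\<in>A. R X Y \<or> R Y X)"

definition transitive_on :: "'a set \<Rightarrow> ('a \<Rightarrow> 'a \<Rightarrow> bool) \<Rightarrow> bool" where
  "transitive_on A R \<longleftrightarrow> (\<forall>X\<in>A. \<forall>Y\<in>A. \<forall>Z\<in>A. R X Y \<longrightarrow> R Y Z \<longrightarrow> R X Z)"

definition conv_in_prob :: "(nat \<Rightarrow> real \<Rightarrow> real) \<Rightarrow> (real \<Rightarrow> real) \<Rightarrow> bool" where
  "conv_in_prob Xs X \<longleftrightarrow>
     (\<forall>e>0. (\<lambda>k. measure PS {s \<in> space PS. \<bar>Xs k s - X s\<bar> \<ge> e}) \<longlonglongrightarrow> 0)"

definition conv_in_dist :: "(nat \<Rightarrow> real \<Rightarrow> real) \<Rightarrow> (real \<Rightarrow> real) \<Rightarrow> bool" where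
  "conv_in_dist Xs X \<longleftrightarrow> weak_conv_m (\<lambda>k. law (Xs k)) (law X)"

definition cont_prob_pref :: "real \<Rightarrow> real \<Rightarrow> ((real \<Rightarrow> real) \<Rightarrow> (real \<Rightarrow> real) \<Rightarrow> bool) \<Rightarrow> bool" where
  "cont_prob_pref xl xu R \<longleftrightarrow>
     (\<forall>Xs X Y. (\<forall>k. Xs k \<in> simpleL xl xu) \<longrightarrow> X \<in> simpleL xl xu \<longrightarrow> Y \<in> simpleL xl xu \<longrightarrow>
        conv_in_prob Xs X \<longrightarrow>
        ((\<forall>k. R (Xs k) Y) \<longrightarrow> R X Y) \<and> ((\<forall>k. R Y (Xs k)) \<longrightarrow> R Y X))"

definition cont_dist_pref :: "real \<Rightarrow> real \<Rightarrow> ((real \<Rightarrow> real) \<Rightarrow> (real \<Rightarrow> real) \<Rightarrow> bool) \<Rightarrow> bool" where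
  "cont_dist_pref xl xu R \<longleftrightarrow>
     (\<forall>Xs X Y. (\<forall>k. Xs k \<in> simpleL xl xu) \<longrightarrow> X \<in> simpleL xl xu \<longrightarrow> Y \<in> simpleL xl xu \<longrightarrow>
        conv_in_dist Xs X \<longrightarrow>
        ((\<forall>k. R (Xs k) Y) \<longrightarrow> R X Y) \<and> ((\<forall>k. R Y (Xs k)) \<longrightarrow> R Y X))"

text \<open>State-wise monotonicity (X, Y written on a common finite partition with x_i >= y_i for
  all cells and strict inequality on some cell of positive probability).\<close>
definition statewise_monotone :: "real \<Rightarrow> real \<Rightarrow> ((real \<Rightarrow> real) \<Rightarrow> (real \<Rightarrow> real) \<Rightarrow> bool) \<Rightarrow> bool" where
  "statewise_monotone xl xu R \<longleftrightarrow>
     (\<forall>X\<in>simpleL xl xu. \<forall>Y\<in>simpleL xl xu.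
        (\<forall>s\<in>space PS. Y s \<le> X s) \<and> measure PS {s \<in> space PS. Y s < X s} > 0
        \<longrightarrow> strict_pref R X Y)"

definition regret_function :: "real \<Rightarrow> real \<Rightarrow> (real \<Rightarrow> real \<Rightarrow> real) \<Rightarrow> bool" where
  "regret_function xl xu \<psi> \<longleftrightarrow>
     continuous_on ({xl..xu} \<times> {xl..xu}) (\<lambda>(x, y). \<psi> x y) \<and>
     (\<forall>x\<in>{xl..xu}. \<psi> x x = 0) \<and>
     (\<forall>y\<in>{xl..xu}. \<forall>x\<in>{xl..xu}. \<forall>x'\<in>{xl..xu}. x < x' \<longrightarrow> \<psi> x y < \<psi> x' y) \<and>
     (\<forall>x\<in>{xl..xu}. \<forall>y\<in>{xl..xu}. \<forall>y'\<in>{xl..xu}. y < y' \<longrightarrow> \<psi> x y' < \<psi> x y)"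

definition regret_lottery :: "(real \<Rightarrow> real \<Rightarrow> real) \<Rightarrow> (real \<Rightarrow> real) \<Rightarrow> (real \<Rightarrow> real) \<Rightarrow> real measure" where
  "regret_lottery \<psi> X Y = distr PS borel (\<lambda>s. \<psi> (X s) (Y s))"

definition regret_lotteries :: "real \<Rightarrow> real \<Rightarrow> (real \<Rightarrow> real \<Rightarrow> real) \<Rightarrow> real measure set" where
  "regret_lotteries xl xu \<psi> = {regret_lottery \<psi> X Y | X Y. X \<in> simpleL xl xu \<and> Y \<in> simpleL xl xu}"

definition continuous_functional_on :: "real measure set \<Rightarrow> (real measure \<Rightarrow> real) \<Rightarrow> bool" where
  "continuous_functional_on A V \<longleftrightarrow>
     (\<forall>Ms M. (\<forall>k. Ms k \<in> A) \<longrightarrow> M \<in> A \<longrightarrow> weak_conv_m Ms M \<longrightarrow> (\<lambda>k. V (Ms k)) \<longlonglongrightarrow> V M)"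

definition regret_based :: "real \<Rightarrow> real \<Rightarrow> ((real \<Rightarrow> real) \<Rightarrow> (real \<Rightarrow> real) \<Rightarrow> bool) \<Rightarrow> bool" where
  "regret_based xl xu R \<longleftrightarrow>
     (\<exists>\<psi> V. regret_function xl xu \<psi> \<and> continuous_functional_on (regret_lotteries xl xu \<psi>) V \<and>
        (\<forall>X\<in>simpleL xl xu. \<forall>Y\<in>simpleL xl xu. R X Y \<longleftrightarrow> V (regret_lottery \<psi> X Y) \<ge> 0))"

definition strict_fosd :: "(real \<Rightarrow> real) \<Rightarrow> (real \<Rightarrow> real) \<Rightarrow> bool" where
  "strict_fosd X Y \<longleftrightarrow> (\<forall>t. cdf (law X) t \<le> cdf (law Y) t) \<and> cdf (law X) \<noteq> cdf (law Y)"

end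

theory Submission
  imports Defs
begin


lemma space_PS[simp]: "space PS = {0..1}"
  by (simp add: PS_def)

lemma sets_PS: "A \<in> sets PS \<longleftrightarrow> A \<in> sets borel \<and> A \<subseteq> {0..1}"
  unfolding PS_def by (subst sets_restrict_space_iff) auto

lemma measure_PS: "A \<subseteq> {0..1} \<Longrightarrow> measure PS A = measure lborel A"
  unfolding PS_def by (rule measure_restrict_space) auto

lemma emeasure_PS: "A \<subseteq> {0..1} \<Longrightarrow> emeasure PS A = emeasure lborel A"
  unfolding PS_def by (rule emeasure_restrict_space) auto

lemma prob_PS: "prob_space PS"
  by (rule prob_spaceI) (simp add: emeasure_PS)

lemma PS_em: "emeasure PS A = ennreal (measure PS A)"
  using finite_measure.emeasure_eq_measure[OF prob_space.finite_measure[OF prob_PS]] .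


lemma cell_sets:
  fixes X Z :: "real \<Rightarrow> real"
  assumes "X \<in> borel_measurable PS" "Z \<in> borel_measurable PS"
  shows "{s\<in>{0..1}. X s = a \<and> Z s = b} \<in> sets PS"
proof -
  have "{s\<in>{0..1}. X s = a \<and> Z s = b} = (X -` {a} \<inter> space PS) \<inter> (Z -` {b} \<inter> space PS)" by auto
  also have "\<dots> \<in> sets PS" 
    by (intro sets.Int measurable_sets[OF assms(1)] measurable_sets[OF assms(2)]) simp_all
  finally show ?thesis .
qed

lemma cell1_sets:
  fixes X :: "real \<Rightarrow> real"
  assumes "X \<in> borel_measurable PS"
  shows "{s\<in>{0..1}. X s = a} \<in> sets PS"
proof -
  have "{s\<in>{0..1}. X s = a} = X -` {a} \<inter> space PS" by auto
  also have "\<dots> \<in> sets PS" 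
    by (rule measurable_sets[OF assms(1)]) simp
  finally show ?thesis .
qed

lemma pre_decomp:
  assumes "X ` {0..1} \<subseteq> W" "Z ` {0..1} \<subseteq> W"
  shows "(\<lambda>s. H (X s) (Z s)) -` A \<inter> {0..1} =
    (\<Union>p\<in>{p\<in>W\<times>W. H (fst p) (snd p) \<in> A}. {s\<in>{0..1}. X s = fst p \<and> Z s = snd p})"
  using assms by (auto simp: image_subset_iff)

lemma pre_sets:
  fixes X Z :: "real \<Rightarrow> real"
  assumes "X \<in> borel_measurable PS" "Z \<in> borel_measurable PS" "finite W"
    "X ` {0..1} \<subseteq> W" "Z ` {0..1} \<subseteq> W"
  shows "(\<lambda>s. H (X s) (Z s)) -` A \<inter> {0..1} \<in> sets PS"
  unfolding pre_decomp[OF assms(4,5)]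
  by (rule sets.finite_UN) (use assms cell_sets in auto)

lemma H_meas:
  fixes X Z :: "real \<Rightarrow> real"
  assumes "X \<in> borel_measurable PS" "Z \<in> borel_measurable PS" "finite W"
    "X ` {0..1} \<subseteq> W" "Z ` {0..1} \<subseteq> W"
  shows "(\<lambda>s. H (X s) (Z s) :: real) \<in> borel_measurable PS"
  by (rule borel_measurableI) (use pre_sets[OF assms] in simp)

lemma pre_measure:
  fixes X Z :: "real \<Rightarrow> real"
  assumes "X \<in> borel_measurable PS" "Z \<in> borel_measurable PS" "finite W"
    "X ` {0..1} \<subseteq> W" "Z ` {0..1} \<subseteq> W"
  shows "measure PS ((\<lambda>s. H (X s) (Z s)) -` A \<inter> {0..1}) =
    (\<Sum>p\<in>{p\<in>W\<times>W. H (fst p) (snd p) \<in> A}. measure PS {s\<in>{0..1}. X s = fst p \<and> Z s = snd p})"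
  unfolding pre_decomp[OF assms(4,5)]
  by (rule measure_finite_Union) 
     (use assms cell_sets in \<open>auto simp: disjoint_family_on_def PS_em\<close>)

lemma distr_eq_cells:
  fixes H :: "real \<Rightarrow> real \<Rightarrow> real" and X1 Z1 X2 Z2 :: "real \<Rightarrow> real"
  assumes "X1 \<in> borel_measurable PS" "Z1 \<in> borel_measurable PS" 
    "X2 \<in> borel_measurable PS" "Z2 \<in> borel_measurable PS" "finite W"
    "X1 ` {0..1} \<subseteq> W" "Z1 ` {0..1} \<subseteq> W" "X2 ` {0..1} \<subseteq> W" "Z2 ` {0..1} \<subseteq> W"
    "\<And>a b. measure PS {s\<in>{0..1}. X1 s = a \<and> Z1 s = b} = measure PS {s\<in>{0..1}. X2 s = a \<and> Z2 s = b}"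
  shows "distr PS borel (\<lambda>s. H (X1 s) (Z1 s)) = distr PS borel (\<lambda>s. H (X2 s) (Z2 s))"
proof (rule measure_eqI)
  fix A :: "real set" assume A: "A \<in> sets (distr PS borel (\<lambda>s. H (X1 s) (Z1 s)))"
  have m1: "(\<lambda>s. H (X1 s) (Z1 s)) \<in> borel_measurable PS" by (rule H_meas) (use assms in auto)
  have m2: "(\<lambda>s. H (X2 s) (Z2 s)) \<in> borel_measurable PS" by (rule H_meas) (use assms in auto)
  have "emeasure (distr PS borel (\<lambda>s. H (X1 s) (Z1 s))) A = emeasure PS ((\<lambda>s. H (X1 s) (Z1 s)) -` A \<inter> {0..1})"
    using A m1 by (simp add: emeasure_distr)
  also have "\<dots> = ennreal (measure PS ((\<lambda>s. H (X1 s) (Z1 s)) -` A \<inter> {0..1}))"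
    by (simp add: PS_em)
  also have "\<dots> = ennreal (measure PS ((\<lambda>s. H (X2 s) (Z2 s)) -` A \<inter> {0..1}))"
    unfolding pre_measure[of X1 Z1 W H A, OF assms(1,2,5,6,7)] pre_measure[of X2 Z2 W H A, OF assms(3,4,5,8,9)]
    using assms(10) by presburger
  also have "\<dots> = emeasure PS ((\<lambda>s. H (X2 s) (Z2 s)) -` A \<inter> {0..1})"
    by (simp add: PS_em)
  also have "\<dots> = emeasure (distr PS borel (\<lambda>s. H (X2 s) (Z2 s))) A"
    using A m2 by (simp add: emeasure_distr)
  finally show "emeasure (distr PS borel (\<lambda>s. H (X1 s) (Z1 s))) A = emeasure (distr PS borel (\<lambda>s. H (X2 s) (Z2 s))) A" .
qed simp



lemma fin_PS: "finite_measure PS"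
  using prob_space.finite_measure[OF prob_PS] .

lemma PS_mono: "A \<subseteq> B \<Longrightarrow> B \<in> sets PS \<Longrightarrow> measure PS A \<le> measure PS B"
  using finite_measure.finite_measure_mono[OF fin_PS] .

lemma PS_le1: "measure PS A \<le> 1"
  using prob_space.prob_le_1[OF prob_PS] .

lemma PS_Union: "A \<in> sets PS \<Longrightarrow> B \<in> sets PS \<Longrightarrow> A \<inter> B = {} \<Longrightarrow>
   measure PS (A \<union> B) = measure PS A + measure PS B"
  by (rule measure_Union) (auto simp: PS_em)

lemma PS_Diff: "A \<in> sets PS \<Longrightarrow> B \<in> sets PS \<Longrightarrow> B \<subseteq> A \<Longrightarrow>
   measure PS (A - B) = measure PS A - measure PS B"
  by (rule measure_Diff) (auto simp: PS_em)

lemma PS_space1: "measure PS {0..1} = 1"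
  using prob_space.prob_space[OF prob_PS] by simp

lemma PS_Icc: "0 \<le> a \<Longrightarrow> b \<le> 1 \<Longrightarrow> a \<le> b \<Longrightarrow> measure PS {a..b} = b - a"
  by (subst measure_PS) auto

lemma PS_Ico: "0 \<le> a \<Longrightarrow> b \<le> 1 \<Longrightarrow> a \<le> b \<Longrightarrow> measure PS {a..<b} = b - a"
  by (subst measure_PS) auto

lemma PS_sing: "measure PS {t} = 0"
proof (cases "t \<in> {0..1}")
  case True
  then show ?thesis by (subst measure_PS) auto
next
  case False
  then have "{t} \<notin> sets PS" by (simp add: sets_PS)
  then show ?thesis by (simp add: measure_notin_sets)
qed

lemma PS_sing_null: "t \<in> {0..1} \<Longrightarrow> {t} \<in> null_sets PS"
  by (auto simp: null_sets_def sets_PS PS_em PS_sing)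

lemma pred_sets:
  fixes X :: "real \<Rightarrow> real"
  assumes "X \<in> borel_measurable PS" "finite (X ` {0..1})"
  shows "{s\<in>{0..1}. P (X s)} \<in> sets PS"
proof -
  have "{s\<in>{0..1}. P (X s)} = (\<Union>v\<in>{v\<in>X ` {0..1}. P v}. {s\<in>{0..1}. X s = v})" by auto
  also have "\<dots> \<in> sets PS" using assms cell1_sets by (intro sets.finite_UN) auto
  finally show ?thesis .
qed

lemma pred2_sets:
  fixes X Z :: "real \<Rightarrow> real"
  assumes "X \<in> borel_measurable PS" "finite (X ` {0..1})"
     "Z \<in> borel_measurable PS" "finite (Z ` {0..1})"
  shows "{s\<in>{0..1}. P (X s) (Z s)} \<in> sets PS"
proof -
  have "{s\<in>{0..1}. P (X s) (Z s)} = (\<lambda>s. if P (X s) (Z s) then 1 else 0::real) -` {1} \<inter> {0..1}" by (auto split: if_splits)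
  also have "\<dots> \<in> sets PS"
    by (rule pre_sets[of X Z "X ` {0..1} \<union> Z ` {0..1}"]) (use assms in auto)
  finally show ?thesis .
qed

lemma measure_split:
  fixes Y :: "real \<Rightarrow> real"
  assumes "Y \<in> borel_measurable PS" "finite W" "Y ` {0..1} \<subseteq> W" "A \<in> sets PS"
  shows "measure PS A = (\<Sum>w\<in>W. measure PS (A \<inter> {s\<in>{0..1}. Y s = w}))"
proof -
  have A01: "A \<subseteq> {0..1}" using assms(4) by (simp add: sets_PS)
  have "A = (\<Union>w\<in>W. A \<inter> {s\<in>{0..1}. Y s = w})" using A01 assms(3) by (fastforce simp: image_subset_iff subset_iff)
  then have "measure PS A = measure PS (\<Union>w\<in>W. A \<inter> {s\<in>{0..1}. Y s = w})" by simp
  also have "\<dots> = (\<Sum>w\<in>W. measure PS (A \<inter> {s\<in>{0..1}. Y s = w}))"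
    by (rule measure_finite_Union) 
       (use assms cell1_sets in \<open>auto simp: disjoint_family_on_def PS_em\<close>)
  finally show ?thesis .
qed

definition Fd :: "(real \<Rightarrow> real) \<Rightarrow> real \<Rightarrow> real" where
  "Fd X t = measure PS {s\<in>{0..1}. X s \<le> t}"
definition Lo :: "(real \<Rightarrow> real) \<Rightarrow> real \<Rightarrow> real" where
  "Lo X t = measure PS {s\<in>{0..1}. X s < t}"
definition pm :: "(real \<Rightarrow> real) \<Rightarrow> real \<Rightarrow> real" where
  "pm X t = measure PS {s\<in>{0..1}. X s = t}"
definition Q :: "(real \<Rightarrow> real) \<Rightarrow> real \<Rightarrow> real" where
  "Q X u = Min {v\<in>X ` {0..1}. u < Fd X v \<or> v = Max (X ` {0..1})}"

definition fm :: "(real \<Rightarrow> real) \<Rightarrow> bool" where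
  "fm X \<longleftrightarrow> X \<in> borel_measurable PS \<and> finite (X ` {0..1})"

lemma simpleL_fm: "X \<in> simpleL xl xu \<Longrightarrow> fm X"
  by (simp add: simpleL_def fm_def)

lemma fm_sets: "fm X \<Longrightarrow> {s\<in>{0..1}. P (X s)} \<in> sets PS"
  using pred_sets[of X P] by (simp add: fm_def)

lemma fm_sets': "fm X \<Longrightarrow> {s. 0 \<le> s \<and> s \<le> 1 \<and> P (X s)} \<in> sets PS"
  using fm_sets[of X P] by simp

lemma Fd_mono: "fm X \<Longrightarrow> t \<le> t' \<Longrightarrow> Fd X t \<le> Fd X t'"
  unfolding Fd_def by (rule PS_mono) (auto intro: fm_sets fm_sets')

lemma Fd_le_Lo: "fm X \<Longrightarrow> v < b \<Longrightarrow> Fd X v \<le> Lo X b"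
  unfolding Fd_def Lo_def by (rule PS_mono) (auto intro: fm_sets fm_sets')

lemma Fd_Max: "fm X \<Longrightarrow> Max (X ` {0..1}) \<le> t \<Longrightarrow> Fd X t = 1"
proof -
  assume a: "fm X" "Max (X ` {0..1}) \<le> t"
  have fin: "finite (X ` {0..1})" using a by (simp add: fm_def)
  have "\<And>s. s \<in> {0..1} \<Longrightarrow> X s \<le> t"
  proof -
    fix s :: real assume "s \<in> {0..1}"
    then have "X s \<le> Max (X ` {0..1})" using fin by (intro Max_ge) auto
    then show "X s \<le> t" using a by linarith
  qed
  then have "{s\<in>{0..1}. X s \<le> t} = {0..1}" by blast
  then show ?thesis by (simp add: Fd_def PS_space1)
qed

lemma Fd_Lo_pm: "fm X \<Longrightarrow> Fd X b = Lo X b + pm X b"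
proof -
  assume a: "fm X"
  have "{s\<in>{0..1}. X s \<le> b} = {s\<in>{0..1}. X s < b} \<union> {s\<in>{0..1}. X s = b}" by auto
  moreover have "measure PS ({s\<in>{0..1}. X s < b} \<union> {s\<in>{0..1}. X s = b}) = 
     measure PS {s\<in>{0..1}. X s < b} + measure PS {s\<in>{0..1}. X s = b}"
    by (rule PS_Union[OF fm_sets[OF a] fm_sets[OF a]]) auto
  ultimately show ?thesis unfolding Fd_def Lo_def pm_def by simp
qed

lemma Lo_pos_ex: "Lo X b > 0 \<Longrightarrow> \<exists>v\<in>X ` {0..1}. v < b"
proof (rule ccontr)
  assume "Lo X b > 0" "\<not> (\<exists>v\<in>X ` {0..1}. v < b)"
  then have e: "{s\<in>{0..1}. X s < b} = {}" by auto
  have "Lo X b = 0" unfolding Lo_def e by simp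
  with \<open>Lo X b > 0\<close> show False by simp
qed

lemma Lo_Fd_max: 
  assumes "fm X" "{v\<in>X ` {0..1}. v < b} \<noteq> {}"
  shows "Lo X b = Fd X (Max {v\<in>X ` {0..1}. v < b})"
proof -
  let ?L = "{v\<in>X ` {0..1}. v < b}"
  have fin: "finite ?L" using assms(1) by (simp add: fm_def)
  have "{s\<in>{0..1}. X s < b} = {s\<in>{0..1}. X s \<le> Max ?L}"
  proof (rule set_eqI, rule iffI)
    fix s assume s: "s \<in> {s\<in>{0..1}. X s < b}"
    then have "X s \<in> ?L" by auto
    then have "X s \<le> Max ?L" by (rule Max_ge[OF fin])
    then show "s \<in> {s\<in>{0..1}. X s \<le> Max ?L}" using s by blast
  next
    fix s assume "s \<in> {s\<in>{0..1}. X s \<le> Max ?L}"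
    moreover have "Max ?L \<in> ?L" using fin assms(2) by (rule Max_in)
    ultimately show "s \<in> {s\<in>{0..1}. X s < b}" by force
  qed
  then show ?thesis by (simp add: Lo_def Fd_def)
qed

lemma Fd_nonneg: "0 \<le> Fd X t" by (simp add: Fd_def)
lemma Lo_nonneg: "0 \<le> Lo X t" by (simp add: Lo_def)
lemma Fd_le1: "Fd X t \<le> 1" by (simp add: Fd_def PS_le1)

lemma V_ne: "(X::real\<Rightarrow>real) ` {0..1} \<noteq> {}"
proof -
  have "X 0 \<in> X ` {0..1}" by (rule imageI) simp
  then show ?thesis by (metis empty_iff)
qed

lemma Q_in: "fm X \<Longrightarrow> Q X u \<in> X ` {0..1}"
proof -
  assume "fm X"
  then have fin: "finite (X ` {0..1})" by (simp add: fm_def)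
  have "Max (X ` {0..1}) \<in> X ` {0..1}" using fin V_ne by (rule Max_in)
  then have ne: "{v\<in>X ` {0..1}. u < Fd X v \<or> v = Max (X ` {0..1})} \<noteq> {}" by blast
  show ?thesis unfolding Q_def using Min_in[OF _ ne] fin by auto
qed

lemma Q_mono: "fm X \<Longrightarrow> mono (Q X)"
proof (rule monoI)
  fix u u' :: real assume "fm X" "u \<le> u'"
  then have fin: "finite (X ` {0..1})" by (simp add: fm_def)
  have "Max (X ` {0..1}) \<in> X ` {0..1}" using fin V_ne by (rule Max_in)
  then have ne: "{v\<in>X ` {0..1}. u' < Fd X v \<or> v = Max (X ` {0..1})} \<noteq> {}" by blast
  show "Q X u \<le> Q X u'" unfolding Q_def
    by (rule Min_antimono) (use ne fin \<open>u \<le> u'\<close> in auto)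
qed

lemma Q_char:
  assumes "fm X" "b \<in> X ` {0..1}" "0 \<le> u" "u \<le> 1"
  shows "Q X u = b \<longleftrightarrow> Lo X b \<le> u \<and> (u < Fd X b \<or> b = Max (X ` {0..1}))"
proof -
  let ?V = "X ` {0..1}"
  let ?S = "{v\<in>?V. u < Fd X v \<or> v = Max ?V}"
  have fin: "finite ?V" using assms(1) by (simp add: fm_def)
  have finS: "finite ?S" using fin by simp
  have MaxV: "Max ?V \<in> ?V" using fin V_ne by (rule Max_in)
  show ?thesis
  proof
    assume q: "Q X u = b"
    have ne: "?S \<noteq> {}" using MaxV by blast
    have bS: "b \<in> ?S" using Min_in[OF finS ne] q by (simp add: Q_def)
    have minb: "\<And>v. v \<in> ?S \<Longrightarrow> b \<le> v" using Min_le[OF finS] q by (simp add: Q_def)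
    have "Lo X b \<le> u"
    proof (rule ccontr)
      assume "\<not> Lo X b \<le> u"
      then have lt: "u < Lo X b" by simp
      have Lne: "{v\<in>?V. v < b} \<noteq> {}" using Lo_pos_ex[of X b] lt assms(3) by auto
      let ?m = "Max {v\<in>?V. v < b}"
      have mL: "?m \<in> {v\<in>?V. v < b}" using fin Lne by (intro Max_in) auto
      have "Fd X ?m = Lo X b" using Lo_Fd_max[OF assms(1) Lne] by simp
      then have "?m \<in> ?S" using mL lt by auto
      then have "b \<le> ?m" by (rule minb)
      with mL show False by auto
    qed
    then show "Lo X b \<le> u \<and> (u < Fd X b \<or> b = Max ?V)" using bS by auto
  next
    assume h: "Lo X b \<le> u \<and> (u < Fd X b \<or> b = Max ?V)"
    have bS: "b \<in> ?S" using h assms(2) by auto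
    have "\<And>v. v \<in> ?S \<Longrightarrow> b \<le> v"
    proof (rule ccontr)
      fix v assume v: "v \<in> ?S" "\<not> b \<le> v"
      then have vb: "v < b" by simp
      have "v \<le> Max ?V" using v fin by auto
      then have "v \<noteq> Max ?V" using vb Max_ge[OF fin assms(2)] by auto
      then have "u < Fd X v" using v by auto
      moreover have "Fd X v \<le> Lo X b" using Fd_le_Lo[OF assms(1) vb] .
      ultimately show False using h by auto
    qed
    then show "Q X u = b" unfolding Q_def using bS finS
      by (intro antisym Min_le) (auto intro: Min.boundedI)
  qed
qed



lemma borelPS: "(f::real\<Rightarrow>real) \<in> borel_measurable borel \<Longrightarrow> f \<in> borel_measurable PS"
  unfolding PS_def by (rule measurable_restrict_space1) simp

definition hh :: "real set \<Rightarrow> real \<Rightarrow> real" where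
  "hh C s = measure PS (C \<inter> {..s})"

lemma hh_sets: "C \<in> sets PS \<Longrightarrow> C \<inter> {..s} \<in> sets PS"
  by (auto simp: sets_PS)

lemma hh_mono: "C \<in> sets PS \<Longrightarrow> s \<le> t \<Longrightarrow> hh C s \<le> hh C t"
  unfolding hh_def by (rule PS_mono) (auto simp: hh_sets)

lemma hh_le: "C \<in> sets PS \<Longrightarrow> hh C s \<le> measure PS C"
  unfolding hh_def by (rule PS_mono) auto

lemma hh_0: "C \<in> sets PS \<Longrightarrow> hh C 0 = 0"
proof -
  assume C: "C \<in> sets PS"
  have "hh C 0 \<le> measure PS {0}" unfolding hh_def
    by (rule PS_mono) (use C in \<open>auto simp: sets_PS\<close>)
  then show ?thesis using PS_sing[of 0] measure_nonneg[of PS "C \<inter> {..0}"] unfolding hh_def by linarith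
qed

lemma hh_1: "C \<in> sets PS \<Longrightarrow> hh C 1 = measure PS C"
proof -
  assume C: "C \<in> sets PS"
  then have "C \<inter> {..1} = C" by (auto simp: sets_PS)
  then show ?thesis by (simp add: hh_def)
qed

lemma hh_lip: 
  assumes C: "C \<in> sets PS" and st: "s \<le> t"
  shows "hh C t - hh C s \<le> t - s"
proof -
  have "hh C t - hh C s = measure PS (C \<inter> {..t} - C \<inter> {..s})"
    unfolding hh_def by (rule PS_Diff[symmetric]) (use C st hh_sets in auto)
  also have "\<dots> \<le> t - s"
  proof (cases "max 0 s \<le> min 1 t")
    case True
    have "measure PS (C \<inter> {..t} - C \<inter> {..s}) \<le> measure PS {max 0 s .. min 1 t}"
      by (rule PS_mono) (use C in \<open>auto simp: sets_PS\<close>)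
    also have "\<dots> = min 1 t - max 0 s" using True by (intro PS_Icc) auto
    also have "\<dots> \<le> t - s" by auto
    finally show ?thesis .
  next
    case False
    have e: "C \<inter> {..t} - C \<inter> {..s} = {}" using C False by (auto simp: sets_PS)
    show ?thesis unfolding e using st by simp
  qed
  finally show ?thesis .
qed

lemma hh_cont: 
  assumes C: "C \<in> sets PS"
  shows "continuous_on A (hh C)"
proof (rule lipschitz_on_continuous_on)
  show "1-lipschitz_on A (hh C)"
  proof (rule lipschitz_onI)
    fix x y assume "x \<in> A" "y \<in> A"
    show "dist (hh C x) (hh C y) \<le> 1 * dist x y"
    proof (cases "x \<le> y")
      case True
      then show ?thesis using hh_lip[OF C True] hh_mono[OF C True] by (simp add: dist_real_def)
    next
      case False
      then have yx: "y \<le> x" by simp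
      show ?thesis using hh_lip[OF C yx] hh_mono[OF C yx] by (simp add: dist_real_def)
    qed
  qed simp
qed

lemma hh_meas: "C \<in> sets PS \<Longrightarrow> hh C \<in> borel_measurable PS"
  by (rule borelPS, rule borel_measurable_mono) (auto simp: mono_def hh_mono)

lemma unif:
  assumes C: "C \<in> sets PS" and u: "0 \<le> u" "u \<le> 1"
  shows "measure PS {s\<in>C. hh C s < u * measure PS C} = u * measure PS C"
proof -
  let ?m = "measure PS C"
  let ?T = "{t. u * ?m \<le> hh C t} \<inter> {0..1}"
  have C01: "C \<subseteq> {0..1}" using C by (simp add: sets_PS)
  have cl: "closed ?T"
    by (intro closed_Int closed_Collect_le continuous_on_const hh_cont[OF C]) auto
  have m0: "0 \<le> ?m" by simp
  have "u * ?m \<le> ?m" using u m0 by (simp add: mult_left_le_one_le)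
  then have T1: "1 \<in> ?T" using hh_1[OF C] by simp
  have bdd: "bdd_below ?T" by (rule bdd_belowI[of _ 0]) auto
  define t0 where "t0 = Inf ?T"
  have t0T: "t0 \<in> ?T" unfolding t0_def by (rule closed_contains_Inf) (use T1 bdd cl in auto)
  have t0le: "\<And>t. t \<in> ?T \<Longrightarrow> t0 \<le> t" unfolding t0_def using bdd by (rule cInf_lower[rotated])
  have "\<exists>t. 0 \<le> t \<and> t \<le> t0 \<and> hh C t = u * ?m"
    by (rule IVT') (use hh_0[OF C] u m0 t0T hh_cont[OF C] in auto)
  then obtain t where t: "0 \<le> t" "t \<le> t0" "hh C t = u * ?m" by blast
  then have "t \<in> ?T" using t0T by auto
  then have "t = t0" using t0le t by force
  with t have ht0: "hh C t0 = u * ?m" by simp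
  have seteq: "{s\<in>C. hh C s < u * ?m} = C \<inter> {..t0} - {t0}"
  proof (rule set_eqI, rule iffI)
    fix s assume s: "s \<in> {s\<in>C. hh C s < u * ?m}"
    have "s < t0"
    proof (rule ccontr)
      assume "\<not> s < t0"
      then have "hh C t0 \<le> hh C s" using hh_mono[OF C] by simp
      then show False using s ht0 by simp
    qed
    then show "s \<in> C \<inter> {..t0} - {t0}" using s by auto
  next
    fix s assume s: "s \<in> C \<inter> {..t0} - {t0}"
    then have "s \<in> {0..1}" using C01 by auto
    have "s \<notin> ?T" using s t0le[of s] by force
    then show "s \<in> {s\<in>C. hh C s < u * ?m}" using s \<open>s \<in> {0..1}\<close> by auto
  qed
  have "measure PS (C \<inter> {..t0} - {t0}) = measure PS (C \<inter> {..t0})"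
    by (rule measure_Diff_null_set) (use hh_sets[OF C] PS_sing_null t0T in auto)
  then show ?thesis using seteq ht0 by (simp add: hh_def)
qed



lemma pm_nonneg: "0 \<le> pm X b" by (simp add: pm_def)

lemma Qlaw:
  assumes X: "fm X" and C: "C \<in> sets PS"
    and G01: "\<And>s. s \<in> C \<Longrightarrow> 0 \<le> G s \<and> G s \<le> 1"
    and Gs: "\<And>u. 0 \<le> u \<Longrightarrow> u \<le> 1 \<Longrightarrow> {s\<in>C. G s < u} \<in> sets PS"
    and Gm: "\<And>u. 0 \<le> u \<Longrightarrow> u \<le> 1 \<Longrightarrow> measure PS {s\<in>C. G s < u} = u * measure PS C"
  shows "measure PS {s\<in>C. Q X (G s) = b} = pm X b * measure PS C"
proof (cases "b \<in> X ` {0..1}")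
  case False
  have e1: "{s\<in>C. Q X (G s) = b} = {}" using Q_in[OF X] False by auto
  have e2: "{s\<in>{0..1}. X s = b} = {}" using False by auto
  show ?thesis unfolding e1 pm_def e2 by simp
next
  case True
  let ?V = "X ` {0..1}"
  have lo0: "0 \<le> Lo X b" by (rule Lo_nonneg)
  have loF: "Lo X b \<le> Fd X b" using Fd_Lo_pm[OF X, of b] pm_nonneg[of X b] by linarith
  have F1: "Fd X b \<le> 1" by (rule Fd_le1)
  have iff: "Q X (G s) = b \<longleftrightarrow> Lo X b \<le> G s \<and> (G s < Fd X b \<or> b = Max ?V)" if s: "s \<in> C" for s
  proof -
    have "0 \<le> G s" "G s \<le> 1" using G01[OF s] by auto
    then show ?thesis by (rule Q_char[OF X True])
  qed
  have seteq: "{s\<in>C. Q X (G s) = b} = {s\<in>C. Lo X b \<le> G s \<and> (G s < Fd X b \<or> b = Max ?V)}"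
    by (rule set_eqI) (use iff in blast)
  show ?thesis
  proof (cases "b = Max ?V")
    case True
    have e: "{s\<in>C. Q X (G s) = b} = C - {s\<in>C. G s < Lo X b}" unfolding seteq using True by (auto simp: not_less)
    have "Fd X b = 1" using Fd_Max[OF X] True by simp
    then have pmb: "pm X b = 1 - Lo X b" using Fd_Lo_pm[OF X, of b] by linarith
    have "measure PS (C - {s\<in>C. G s < Lo X b}) = measure PS C - measure PS {s\<in>C. G s < Lo X b}"
      by (rule PS_Diff) (use C Gs lo0 loF F1 in auto)
    also have "\<dots> = pm X b * measure PS C" unfolding pmb using Gm[of "Lo X b"] lo0 loF F1
      by (simp add: left_diff_distrib)
    finally show ?thesis using e by simp
  next
    case False
    have e: "{s\<in>C. Q X (G s) = b} = {s\<in>C. G s < Fd X b} - {s\<in>C. G s < Lo X b}"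
      unfolding seteq using False by (auto simp: not_less)
    have pmb: "pm X b = Fd X b - Lo X b" using Fd_Lo_pm[OF X, of b] by linarith
    have "measure PS ({s\<in>C. G s < Fd X b} - {s\<in>C. G s < Lo X b}) = 
        measure PS {s\<in>C. G s < Fd X b} - measure PS {s\<in>C. G s < Lo X b}"
      by (rule PS_Diff) (use C Gs lo0 loF F1 in auto)
    also have "\<dots> = pm X b * measure PS C" unfolding pmb using Gm[of "Lo X b"] Gm[of "Fd X b"] lo0 loF F1
      by (simp add: left_diff_distrib)
    finally show ?thesis using e by simp
  qed
qed

definition cellp :: "(real \<Rightarrow> real) \<Rightarrow> (real \<Rightarrow> real) \<Rightarrow> real \<Rightarrow> real \<Rightarrow> real set" where
  "cellp X X' a a' = {s\<in>{0..1}. X s = a \<and> X' s = a'}"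

definition Gz :: "(real \<Rightarrow> real) \<Rightarrow> (real \<Rightarrow> real) \<Rightarrow> real \<Rightarrow> real" where
  "Gz X X' s = hh (cellp X X' (X s) (X' s)) s / measure PS (cellp X X' (X s) (X' s))"

lemma cellp_sets: "fm X \<Longrightarrow> fm X' \<Longrightarrow> cellp X X' a a' \<in> sets PS"
  unfolding cellp_def fm_def by (rule cell_sets) auto

lemma Gz_cell: "s \<in> cellp X X' a a' \<Longrightarrow> Gz X X' s = hh (cellp X X' a a') s / measure PS (cellp X X' a a')"
  unfolding Gz_def by (simp add: cellp_def)

lemma Gz_01:
  assumes "fm X" "fm X'" "s \<in> cellp X X' a a'"
  shows "0 \<le> Gz X X' s \<and> Gz X X' s \<le> 1"
proof -
  let ?C = "cellp X X' a a'"
  have C: "?C \<in> sets PS" by (rule cellp_sets[OF assms(1,2)])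
  have h0: "0 \<le> hh ?C s" by (simp add: hh_def)
  have h1: "hh ?C s \<le> measure PS ?C" by (rule hh_le[OF C])
  show ?thesis unfolding Gz_cell[OF assms(3)] using h0 h1
    by (cases "measure PS ?C = 0") (auto simp: divide_le_eq_1)
qed

lemma Gz_sets:
  assumes "fm X" "fm X'"
  shows "{s\<in>cellp X X' a a'. Gz X X' s < u} \<in> sets PS"
proof -
  let ?C = "cellp X X' a a'"
  have C: "?C \<in> sets PS" by (rule cellp_sets[OF assms(1,2)])
  have "{s\<in>?C. Gz X X' s < u} = ?C \<inter> {s\<in>space PS. hh ?C s / measure PS ?C < u}"
    using Gz_cell[of _ X X' a a'] C by (auto simp: sets_PS)
  also have "\<dots> \<in> sets PS" using C hh_meas[OF C] by measurable
  finally show ?thesis .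
qed

lemma Gz_meas_cell:
  assumes "fm X" "fm X'" "0 \<le> u" "u \<le> 1"
  shows "measure PS {s\<in>cellp X X' a a'. Gz X X' s < u} = u * measure PS (cellp X X' a a')"
proof -
  let ?C = "cellp X X' a a'"
  have C: "?C \<in> sets PS" by (rule cellp_sets[OF assms(1,2)])
  show ?thesis
  proof (cases "measure PS ?C = 0")
    case True
    have "measure PS {s\<in>?C. Gz X X' s < u} \<le> measure PS ?C"
      by (rule PS_mono) (use C in auto)
    then show ?thesis using True measure_nonneg[of PS "{s\<in>?C. Gz X X' s < u}"] by simp
  next
    case False
    then have mpos: "measure PS ?C > 0" using measure_nonneg[of PS ?C] by linarith
    have "{s\<in>?C. Gz X X' s < u} = {s\<in>?C. hh ?C s < u * measure PS ?C}"
      using Gz_cell[of _ X X' a a'] mpos by (auto simp: divide_less_eq)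
    then show ?thesis using unif[OF C assms(3,4)] by simp
  qed
qed

lemma Gz_eq_sum:
  assumes "s \<in> {0..1}" "X ` {0..1} \<subseteq> W" "X' ` {0..1} \<subseteq> W'" "finite W" "finite W'"
  shows "Gz X X' s = (\<Sum>p\<in>W\<times>W'. indicator (cellp X X' (fst p) (snd p)) s *
           (hh (cellp X X' (fst p) (snd p)) s / measure PS (cellp X X' (fst p) (snd p))))"
proof -
  let ?F = "\<lambda>p. hh (cellp X X' (fst p) (snd p)) s / measure PS (cellp X X' (fst p) (snd p))"
  have "\<And>p. indicator (cellp X X' (fst p) (snd p)) s * ?F p = (if p = (X s, X' s) then ?F p else 0)"
    using assms(1) by (auto simp: indicator_def cellp_def)
  then have "(\<Sum>p\<in>W\<times>W'. indicator (cellp X X' (fst p) (snd p)) s * ?F p) = 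
      (\<Sum>p\<in>W\<times>W'. if p = (X s, X' s) then ?F p else 0)" by simp
  also have "\<dots> = ?F (X s, X' s)" using assms by (subst sum.delta) (auto simp: image_subset_iff)
  finally show ?thesis by (simp add: Gz_def)
qed

lemma Gz_meas:
  assumes "fm X" "fm X'"
  shows "Gz X X' \<in> borel_measurable PS"
proof -
  let ?W = "X ` {0..1}" and ?W' = "X' ` {0..1}"
  have f: "finite ?W" "finite ?W'" using assms by (auto simp: fm_def)
  let ?S = "\<lambda>s. (\<Sum>p\<in>?W\<times>?W'. indicator (cellp X X' (fst p) (snd p)) s *
           (hh (cellp X X' (fst p) (snd p)) s / measure PS (cellp X X' (fst p) (snd p))))"
  have S: "?S \<in> borel_measurable PS"
    by (intro borel_measurable_sum borel_measurable_times borel_measurable_indicator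
        borel_measurable_divide borel_measurable_const hh_meas cellp_sets assms)
  have eq: "\<And>s. s \<in> space PS \<Longrightarrow> Gz X X' s = ?S s"
    using Gz_eq_sum[OF _ _ _ f] by simp
  have "Gz X X' \<in> borel_measurable PS \<longleftrightarrow> ?S \<in> borel_measurable PS"
    by (rule measurable_cong) (rule eq)
  then show ?thesis using S by simp
qed



definition Zc :: "(real \<Rightarrow> real) \<Rightarrow> (real \<Rightarrow> real) \<Rightarrow> real \<Rightarrow> real" where
  "Zc X X' s = Q X (Gz X X' s)"

lemma Q_meas: "fm X \<Longrightarrow> Q X \<in> borel_measurable borel"
  by (rule borel_measurable_mono[OF Q_mono])

lemma Zc_meas: "fm X \<Longrightarrow> fm X' \<Longrightarrow> Zc X X' \<in> borel_measurable PS"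
  unfolding Zc_def by (rule measurable_compose[OF Gz_meas Q_meas])

lemma Zc_img: "fm X \<Longrightarrow> Zc X X' ` {0..1} \<subseteq> X ` {0..1}"
  unfolding Zc_def using Q_in by blast

lemma Zc_fm: "fm X \<Longrightarrow> fm X' \<Longrightarrow> fm (Zc X X')"
  unfolding fm_def using Zc_meas Zc_img finite_subset by (metis fm_def)

lemma Zc_cell:
  assumes "fm X" "fm X'"
  shows "measure PS {s\<in>cellp X X' a a'. Zc X X' s = b} = pm X b * measure PS (cellp X X' a a')"
  unfolding Zc_def
  by (rule Qlaw[OF assms(1) cellp_sets[OF assms]])
     (use Gz_01[OF assms] Gz_sets[OF assms] Gz_meas_cell[OF assms] in auto)

lemma joint1:
  assumes X: "fm X" and X': "fm X'"
  shows "measure PS {s\<in>{0..1}. X s = a \<and> Zc X X' s = b} = pm X a * pm X b"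
proof -
  let ?W' = "X' ` {0..1}"
  have fW: "finite ?W'" using X' by (simp add: fm_def)
  have Xm: "X \<in> borel_measurable PS" and X'm: "X' \<in> borel_measurable PS" using X X' by (auto simp: fm_def)
  have A: "{s\<in>{0..1}. X s = a \<and> Zc X X' s = b} \<in> sets PS"
    by (rule cell_sets[OF Xm Zc_meas[OF X X']])
  have "measure PS {s\<in>{0..1}. X s = a \<and> Zc X X' s = b} = 
     (\<Sum>w\<in>?W'. measure PS ({s\<in>{0..1}. X s = a \<and> Zc X X' s = b} \<inter> {s\<in>{0..1}. X' s = w}))"
    by (rule measure_split[OF X'm fW _ A]) simp
  also have "\<dots> = (\<Sum>w\<in>?W'. measure PS {s\<in>cellp X X' a w. Zc X X' s = b})"
    by (intro sum.cong refl arg_cong[where f="measure PS"]) (auto simp: cellp_def)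
  also have "\<dots> = (\<Sum>w\<in>?W'. pm X b * measure PS (cellp X X' a w))"
    using Zc_cell[OF X X'] by simp
  also have "\<dots> = pm X b * (\<Sum>w\<in>?W'. measure PS ({s\<in>{0..1}. X s = a} \<inter> {s\<in>{0..1}. X' s = w}))"
    by (simp add: sum_distrib_left cellp_def Int_def conj_commute conj_left_commute)
  also have "(\<Sum>w\<in>?W'. measure PS ({s\<in>{0..1}. X s = a} \<inter> {s\<in>{0..1}. X' s = w})) = pm X a"
    unfolding pm_def by (rule measure_split[OF X'm fW _ cell1_sets[OF Xm], symmetric]) simp
  finally show ?thesis by simp
qed

lemma joint2:
  assumes X: "fm X" and X': "fm X'"
  shows "measure PS {s\<in>{0..1}. X' s = a \<and> Zc X X' s = b} = pm X' a * pm X b"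
proof -
  let ?W = "X ` {0..1}"
  have fW: "finite ?W" using X by (simp add: fm_def)
  have Xm: "X \<in> borel_measurable PS" and X'm: "X' \<in> borel_measurable PS" using X X' by (auto simp: fm_def)
  have A: "{s\<in>{0..1}. X' s = a \<and> Zc X X' s = b} \<in> sets PS"
    by (rule cell_sets[OF X'm Zc_meas[OF X X']])
  have "measure PS {s\<in>{0..1}. X' s = a \<and> Zc X X' s = b} = 
     (\<Sum>w\<in>?W. measure PS ({s\<in>{0..1}. X' s = a \<and> Zc X X' s = b} \<inter> {s\<in>{0..1}. X s = w}))"
    by (rule measure_split[OF Xm fW _ A]) simp
  also have "\<dots> = (\<Sum>w\<in>?W. measure PS {s\<in>cellp X X' w a. Zc X X' s = b})"
    by (intro sum.cong refl arg_cong[where f="measure PS"]) (auto simp: cellp_def)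
  also have "\<dots> = (\<Sum>w\<in>?W. pm X b * measure PS (cellp X X' w a))"
    using Zc_cell[OF X X'] by simp
  also have "\<dots> = pm X b * (\<Sum>w\<in>?W. measure PS ({s\<in>{0..1}. X' s = a} \<inter> {s\<in>{0..1}. X s = w}))"
    by (simp add: sum_distrib_left cellp_def Int_def conj_commute conj_left_commute)
  also have "(\<Sum>w\<in>?W. measure PS ({s\<in>{0..1}. X' s = a} \<inter> {s\<in>{0..1}. X s = w})) = pm X' a"
    unfolding pm_def by (rule measure_split[OF Xm fW _ cell1_sets[OF X'm], symmetric]) simp
  finally show ?thesis by simp
qed

lemma swap_cell: "measure PS {s\<in>{0..1}. Z s = a \<and> X s = b} = measure PS {s\<in>{0..1}. X s = b \<and> Z s = a}"
  by (simp add: conj_commute)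

lemma sym_indiff:
  assumes comp: "complete_on (simpleL xl xu) R" and rb: "regret_based xl xu R"
    and X: "X \<in> simpleL xl xu" and Z: "Z \<in> simpleL xl xu"
    and sym: "\<And>a b. measure PS {s\<in>{0..1}. X s = a \<and> Z s = b} = measure PS {s\<in>{0..1}. Z s = a \<and> X s = b}"
  shows "R X Z \<and> R Z X"
proof -
  obtain \<psi> :: "real \<Rightarrow> real \<Rightarrow> real" and V :: "real measure \<Rightarrow> real" where rep: "\<And>X Y. X \<in> simpleL xl xu \<Longrightarrow> Y \<in> simpleL xl xu \<Longrightarrow> R X Y \<longleftrightarrow> V (regret_lottery \<psi> X Y) \<ge> 0"
    using rb unfolding regret_based_def by blast
  have Xf: "fm X" "fm Z" using X Z by (auto intro: simpleL_fm)
  have "regret_lottery \<psi> X Z = regret_lottery \<psi> Z X"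
    unfolding regret_lottery_def
    by (rule distr_eq_cells[of _ _ _ _ "X ` {0..1} \<union> Z ` {0..1}"]) (use Xf sym in \<open>auto simp: fm_def\<close>)
  then have "R X Z \<longleftrightarrow> R Z X" using rep[OF X Z] rep[OF Z X] by simp
  moreover have "R X Z \<or> R Z X" using comp X Z unfolding complete_on_def by blast
  ultimately show ?thesis by blast
qed

lemma Zc_simpleL: "X \<in> simpleL xl xu \<Longrightarrow> fm X' \<Longrightarrow> Zc X X' \<in> simpleL xl xu"
proof -
  assume X: "X \<in> simpleL xl xu" and X': "fm X'"
  have Xf: "fm X" using X by (rule simpleL_fm)
  have "Zc X X' ` {0..1} \<subseteq> {xl..xu}" using Zc_img[OF Xf] X by (auto simp: simpleL_def)
  then show ?thesis using Zc_fm[OF Xf X'] by (auto simp: simpleL_def fm_def)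
qed

lemma sameLaw:
  assumes comp: "complete_on (simpleL xl xu) R" and tr: "transitive_on (simpleL xl xu) R"
    and rb: "regret_based xl xu R"
    and X: "X \<in> simpleL xl xu" and X': "X' \<in> simpleL xl xu"
    and law: "\<And>b. pm X b = pm X' b"
  shows "R X X' \<and> R X' X"
proof -
  have Xf: "fm X" and X'f: "fm X'" using X X' by (auto intro: simpleL_fm)
  let ?Z = "Zc X X'"
  have Z: "?Z \<in> simpleL xl xu" by (rule Zc_simpleL[OF X X'f])
  have 1: "R X ?Z \<and> R ?Z X"
    by (rule sym_indiff[OF comp rb X Z]) (simp only: swap_cell[of "Zc X X'" _ X] joint1[OF Xf X'f] mult.commute)
  have 2: "R ?Z X' \<and> R X' ?Z"
    by (rule sym_indiff[OF comp rb Z X']) (simp only: swap_cell[of "Zc X X'" _ X'] joint2[OF Xf X'f] law mult.commute)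
  show ?thesis using 1 2 tr X X' Z unfolding transitive_on_def by blast
qed



definition Gst :: "real \<Rightarrow> real" where "Gst s = (if s = 1 then 0 else s)"
definition Xst :: "(real \<Rightarrow> real) \<Rightarrow> real \<Rightarrow> real" where "Xst X s = Q X (Gst s)"

lemma Gst_meas: "Gst \<in> borel_measurable PS"
proof -
  have "(\<lambda>s::real. if s = 1 then 0 else s) \<in> borel_measurable borel" by measurable
  then show ?thesis unfolding Gst_def by (rule borelPS)
qed

lemma Gst_set: 
  assumes "0 < u" "u \<le> 1"
  shows "{s\<in>{0..1}. Gst s < u} = {0..<u} \<union> {1}"
  using assms by (auto simp: Gst_def)

lemma Gst_sets: "{s\<in>{0..1}. Gst s < u} \<in> sets PS"
proof -
  have "{s\<in>{0..1}. Gst s < u} = {s\<in>space PS. Gst s < u}" by simp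
  also have "\<dots> \<in> sets PS" using Gst_meas by measurable
  finally show ?thesis .
qed

lemma Gst_m:
  assumes "0 \<le> u" "u \<le> 1"
  shows "measure PS {s\<in>{0..1}. Gst s < u} = u * measure PS {0..1}"
proof (cases "u = 0")
  case True
  then have e: "{s\<in>{0..1}. Gst s < u} = {}" by (auto simp: Gst_def)
  show ?thesis unfolding e using True by simp
next
  case False
  then have u: "0 < u" using assms by simp
  have "measure PS ({0..<u} \<union> {1}) = measure PS {0..<u}"
    by (rule measure_Un_null_set) (use assms PS_sing_null in \<open>auto simp: sets_PS\<close>)
  then show ?thesis using Gst_set[OF u assms(2)] PS_Ico[of 0 u] assms by (simp add: PS_space1)
qed

lemma Xst_law: "fm X \<Longrightarrow> pm (Xst X) b = pm X b"
  unfolding pm_def Xst_def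
  using Qlaw[of X "{0..1}" Gst b] Gst_sets Gst_m PS_space1
  by (auto simp: sets_PS Gst_def pm_def)

lemma Xst_meas: "fm X \<Longrightarrow> Xst X \<in> borel_measurable PS"
  unfolding Xst_def by (rule measurable_compose[OF Gst_meas Q_meas])

lemma Xst_simpleL: "X \<in> simpleL xl xu \<Longrightarrow> Xst X \<in> simpleL xl xu"
proof -
  assume X: "X \<in> simpleL xl xu"
  have Xf: "fm X" using X by (rule simpleL_fm)
  have img: "Xst X ` {0..1} \<subseteq> X ` {0..1}" unfolding Xst_def using Q_in[OF Xf] by blast
  then have "Xst X ` {0..1} \<subseteq> {xl..xu}" using X by (auto simp: simpleL_def)
  moreover have "finite (Xst X ` {0..1})" using img Xf finite_subset by (auto simp: fm_def)
  ultimately show ?thesis using Xst_meas[OF Xf] by (auto simp: simpleL_def)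
qed

lemma Xst_indiff:
  assumes comp: "complete_on (simpleL xl xu) R" and tr: "transitive_on (simpleL xl xu) R"
    and rb: "regret_based xl xu R" and X: "X \<in> simpleL xl xu"
  shows "R X (Xst X) \<and> R (Xst X) X"
  by (rule sameLaw[OF comp tr rb X Xst_simpleL[OF X]]) (simp add: Xst_law[OF simpleL_fm[OF X]])

lemma Fd_empty: "{v\<in>X ` {0..1}. v \<le> t} = {} \<Longrightarrow> Fd X t = 0"
proof -
  assume "{v\<in>X ` {0..1}. v \<le> t} = {}"
  then have e: "{s\<in>{0..1}. X s \<le> t} = {}" by auto
  show ?thesis unfolding Fd_def e by simp
qed

lemma Fd_maxle:
  assumes "fm X" "{v\<in>X ` {0..1}. v \<le> t} \<noteq> {}"
  shows "Fd X t = Fd X (Max {v\<in>X ` {0..1}. v \<le> t})"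
proof -
  let ?L = "{v\<in>X ` {0..1}. v \<le> t}"
  have fin: "finite ?L" using assms(1) by (simp add: fm_def)
  have mL: "Max ?L \<in> ?L" using fin assms(2) by (rule Max_in)
  have "{s\<in>{0..1}. X s \<le> t} = {s\<in>{0..1}. X s \<le> Max ?L}"
  proof (rule set_eqI, rule iffI)
    fix s assume s: "s \<in> {s\<in>{0..1}. X s \<le> t}"
    then have "X s \<in> ?L" by auto
    then have "X s \<le> Max ?L" by (rule Max_ge[OF fin])
    then show "s \<in> {s\<in>{0..1}. X s \<le> Max ?L}" using s by blast
  next
    fix s assume "s \<in> {s\<in>{0..1}. X s \<le> Max ?L}"
    with mL show "s \<in> {s\<in>{0..1}. X s \<le> t}" by force
  qed
  then show ?thesis by (simp add: Fd_def)
qed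

lemma Q_le:
  assumes X: "fm X" and u: "0 \<le> u" and lt: "u < Fd X t"
  shows "Q X u \<le> t"
proof -
  let ?V = "X ` {0..1}"
  let ?L = "{v\<in>?V. v \<le> t}"
  let ?S = "{v\<in>?V. u < Fd X v \<or> v = Max ?V}"
  have fin: "finite ?V" using X by (simp add: fm_def)
  have Lne: "?L \<noteq> {}" using Fd_empty[of X t] lt u by auto
  have mL: "Max ?L \<in> ?L" using fin Lne by (intro Max_in) auto
  have "u < Fd X (Max ?L)" using Fd_maxle[OF X Lne] lt by simp
  then have "Max ?L \<in> ?S" using mL by auto
  then have "Q X u \<le> Max ?L" unfolding Q_def using fin by (intro Min_le) auto
  then show ?thesis using mL by auto
qed

lemma Q_gt:
  assumes X: "fm X" and u: "u < 1"
  shows "u < Fd X (Q X u)"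
proof -
  let ?V = "X ` {0..1}"
  let ?S = "{v\<in>?V. u < Fd X v \<or> v = Max ?V}"
  have fin: "finite ?V" using X by (simp add: fm_def)
  have MaxV: "Max ?V \<in> ?V" using fin V_ne by (rule Max_in)
  then have ne: "?S \<noteq> {}" by blast
  have "Q X u \<in> ?S" unfolding Q_def by (rule Min_in) (use fin ne in auto)
  then have "u < Fd X (Q X u) \<or> Q X u = Max ?V" by blast
  then show ?thesis using Fd_Max[OF X, of "Max ?V"] u by auto
qed

lemma cdf_law: "X \<in> borel_measurable PS \<Longrightarrow> cdf (law X) t = Fd X t"
proof -
  assume X: "X \<in> borel_measurable PS"
  have "cdf (law X) t = measure PS (X -` {..t} \<inter> space PS)"
    unfolding cdf_def law_def by (rule measure_distr[OF X]) simp
  also have "X -` {..t} \<inter> space PS = {s\<in>{0..1}. X s \<le> t}" by auto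
  finally show ?thesis by (simp add: Fd_def)
qed

lemma Xst_mono:
  assumes X: "fm X" and Y: "fm Y" and le: "\<And>t. Fd X t \<le> Fd Y t" and s: "s \<in> {0..1}"
  shows "Xst Y s \<le> Xst X s"
proof -
  have u: "0 \<le> Gst s" "Gst s < 1" using s by (auto simp: Gst_def)
  have "Gst s < Fd X (Q X (Gst s))" by (rule Q_gt[OF X u(2)])
  also have "\<dots> \<le> Fd Y (Q X (Gst s))" by (rule le)
  finally show ?thesis unfolding Xst_def by (rule Q_le[OF Y u(1)])
qed

lemma fosd_part:
  assumes comp: "complete_on (simpleL xl xu) R" and tr: "transitive_on (simpleL xl xu) R"
    and rb: "regret_based xl xu R" and sm: "statewise_monotone xl xu R"
    and X: "X \<in> simpleL xl xu" and Y: "Y \<in> simpleL xl xu" and fosd: "strict_fosd X Y"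
  shows "strict_pref R X Y"
proof -
  have Xf: "fm X" and Yf: "fm Y" using X Y by (auto intro: simpleL_fm)
  have Xm: "X \<in> borel_measurable PS" and Ym: "Y \<in> borel_measurable PS" using Xf Yf by (auto simp: fm_def)
  have le: "\<And>t. Fd X t \<le> Fd Y t" using fosd cdf_law[OF Xm] cdf_law[OF Ym] by (simp add: strict_fosd_def)
  have ne: "Fd X \<noteq> Fd Y"
  proof
    assume "Fd X = Fd Y"
    then have "cdf (law X) = cdf (law Y)" using cdf_law[OF Xm] cdf_law[OF Ym] by auto
    then show False using fosd by (simp add: strict_fosd_def)
  qed
  then obtain t0 where t0: "Fd X t0 \<noteq> Fd Y t0" by auto
  then have lt: "Fd X t0 < Fd Y t0" using le[of t0] by simp
  let ?X = "Xst X" and ?Y = "Xst Y"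
  have XS: "?X \<in> simpleL xl xu" and YS: "?Y \<in> simpleL xl xu" using X Y by (auto intro: Xst_simpleL)
  have XSf: "fm ?X" and YSf: "fm ?Y" using XS YS by (auto intro: simpleL_fm)
  have mono: "\<forall>s\<in>space PS. ?Y s \<le> ?X s" using Xst_mono[OF Xf Yf le] by simp
  have sub: "{Fd X t0 ..< Fd Y t0} \<subseteq> {s\<in>{0..1}. ?Y s < ?X s}"
  proof
    fix s assume s: "s \<in> {Fd X t0 ..< Fd Y t0}"
    have s0: "0 \<le> s" using s Fd_nonneg[of X t0] by auto
    have s1: "s < 1" using s Fd_le1[of Y t0] by auto
    have G: "Gst s = s" using s1 by (simp add: Gst_def)
    have "Q Y s \<le> t0" by (rule Q_le[OF Yf s0]) (use s in auto)
    moreover have "t0 < Q X s"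
    proof (rule ccontr)
      assume "\<not> t0 < Q X s"
      then have "Fd X (Q X s) \<le> Fd X t0" by (intro Fd_mono[OF Xf]) simp
      moreover have "s < Fd X (Q X s)" by (rule Q_gt[OF Xf s1])
      ultimately show False using s by auto
    qed
    ultimately show "s \<in> {s\<in>{0..1}. ?Y s < ?X s}" using s0 s1 G by (auto simp: Xst_def)
  qed
  have "0 < Fd Y t0 - Fd X t0" using lt by simp
  also have "Fd Y t0 - Fd X t0 = measure PS {Fd X t0 ..< Fd Y t0}"
    using lt Fd_nonneg[of X t0] Fd_le1[of Y t0] by (simp add: PS_Ico)
  also have "\<dots> \<le> measure PS {s\<in>{0..1}. ?Y s < ?X s}"
    by (rule PS_mono[OF sub]) (use pred2_sets[of ?Y ?X "\<lambda>a b. a < b"] YSf XSf in \<open>auto simp: fm_def\<close>)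
  finally have pos: "measure PS {s\<in>space PS. ?Y s < ?X s} > 0" by simp
  have sp: "strict_pref R ?X ?Y" using sm XS YS mono pos unfolding statewise_monotone_def by blast
  have iX: "R X ?X \<and> R ?X X" by (rule Xst_indiff[OF comp tr rb X])
  have iY: "R Y ?Y \<and> R ?Y Y" by (rule Xst_indiff[OF comp tr rb Y])
  show ?thesis using sp iX iY tr X Y XS YS unfolding strict_pref_def transitive_on_def by meson
qed



lemma Fd_isCont:
  assumes X: "fm X" and t: "t \<notin> X ` {0..1}"
  shows "isCont (Fd X) t"
proof -
  let ?V = "X ` {0..1}"
  have "closed ?V" using X by (intro finite_imp_closed) (simp add: fm_def)
  then have "open (- ?V)" by auto
  then obtain e where e: "e > 0" "ball t e \<subseteq> - ?V" using t open_contains_ball by blast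
  have eq: "Fd X y = Fd X t" if y: "dist y t < e" for y
  proof -
    have "{s\<in>{0..1}. X s \<le> y} = {s\<in>{0..1}. X s \<le> t}"
    proof (rule set_eqI, rule iffI)
      fix s assume s: "s \<in> {s\<in>{0..1}. X s \<le> y}"
      show "s \<in> {s\<in>{0..1}. X s \<le> t}"
      proof (rule ccontr)
        assume "s \<notin> {s\<in>{0..1}. X s \<le> t}"
        then have "t < X s" using s by auto
        then have "dist t (X s) < e" using s y by (auto simp: dist_real_def)
        then have "X s \<in> ball t e" by simp
        then show False using e s by auto
      qed
    next
      fix s assume s: "s \<in> {s\<in>{0..1}. X s \<le> t}"
      show "s \<in> {s\<in>{0..1}. X s \<le> y}"
      proof (rule ccontr)
        assume "s \<notin> {s\<in>{0..1}. X s \<le> y}"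
        then have "y < X s" using s by auto
        then have "dist t (X s) < e" using s y by (auto simp: dist_real_def)
        then have "X s \<in> ball t e" by simp
        then show False using e s by auto
      qed
    qed
    then show ?thesis by (simp add: Fd_def)
  qed
  have "eventually (\<lambda>y. Fd X y = Fd X t) (at t)"
    unfolding eventually_at using e eq by blast
  then have "(Fd X \<longlongrightarrow> Fd X t) (at t)" by (rule tendsto_eventually)
  then show ?thesis by (simp add: continuous_at)
qed

lemma pick_pt:
  assumes "a < b" "finite (V::real set)"
  obtains t where "a < t" "t < b" "t \<notin> V"
proof -
  have "infinite ({a<..<b} - V)" using assms by (intro Diff_infinite_finite) auto
  then have "{a<..<b} - V \<noteq> {}" by (metis finite.emptyI)
  then obtain t where "t \<in> {a<..<b} - V" by blast
  then show ?thesis by (intro that) auto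
qed

lemma Q_conv:
  assumes Xk: "\<And>k. fm (Xs k)" and X: "fm X"
    and wc: "\<And>t. t \<notin> X ` {0..1} \<Longrightarrow> (\<lambda>k. Fd (Xs k) t) \<longlonglongrightarrow> Fd X t"
    and u: "0 < u" "u < 1" and uE: "u \<notin> Fd X ` X ` {0..1}"
  shows "(\<lambda>k. Q (Xs k) u) \<longlonglongrightarrow> Q X u"
proof (rule order_tendstoI)
  let ?V = "X ` {0..1}"
  have fin: "finite ?V" using X by (simp add: fm_def)
  fix a assume a: "a < Q X u"
  obtain t0 where t0: "a < t0" "t0 < Q X u" "t0 \<notin> ?V" using pick_pt[OF a fin] by blast
  have le: "Fd X t0 \<le> u"
  proof (rule ccontr)
    assume "\<not> Fd X t0 \<le> u"
    then have "Q X u \<le> t0" using Q_le[OF X] u by simp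
    then show False using t0 by simp
  qed
  have ne: "Fd X t0 \<noteq> u"
  proof (cases "{v\<in>?V. v \<le> t0} = {}")
    case True
    then show ?thesis using Fd_empty[OF True] u by simp
  next
    case False
    have "Max {v\<in>?V. v \<le> t0} \<in> ?V" using Max_in[of "{v\<in>?V. v \<le> t0}"] fin False by auto
    then have "Fd X t0 \<in> Fd X ` ?V" using Fd_maxle[OF X False] by simp
    then show ?thesis using uE by auto
  qed
  have "Fd X t0 < u" using le ne by simp
  then have ev: "eventually (\<lambda>k. Fd (Xs k) t0 < u) sequentially"
    by (rule order_tendstoD(2)[OF wc[OF t0(3)]])
  show "eventually (\<lambda>k. a < Q (Xs k) u) sequentially"
  proof (rule eventually_mono[OF ev])
    fix k assume k: "Fd (Xs k) t0 < u"
    have "t0 < Q (Xs k) u"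
    proof (rule ccontr)
      assume "\<not> t0 < Q (Xs k) u"
      then have "Fd (Xs k) (Q (Xs k) u) \<le> Fd (Xs k) t0" by (intro Fd_mono[OF Xk]) simp
      moreover have "u < Fd (Xs k) (Q (Xs k) u)" by (rule Q_gt[OF Xk u(2)])
      ultimately show False using k by simp
    qed
    then show "a < Q (Xs k) u" using t0 by simp
  qed
next
  let ?V = "X ` {0..1}"
  have fin: "finite ?V" using X by (simp add: fm_def)
  fix a assume a: "Q X u < a"
  obtain t1 where t1: "Q X u < t1" "t1 < a" "t1 \<notin> ?V" using pick_pt[OF a fin] by blast
  have "u < Fd X (Q X u)" by (rule Q_gt[OF X u(2)])
  also have "\<dots> \<le> Fd X t1" using t1 by (intro Fd_mono[OF X]) simp
  finally have "u < Fd X t1" .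
  then have ev: "eventually (\<lambda>k. u < Fd (Xs k) t1) sequentially"
    by (rule order_tendstoD(1)[OF wc[OF t1(3)]])
  show "eventually (\<lambda>k. Q (Xs k) u < a) sequentially"
  proof (rule eventually_mono[OF ev])
    fix k assume k: "u < Fd (Xs k) t1"
    have "Q (Xs k) u \<le> t1" by (rule Q_le[OF Xk]) (use u k in auto)
    then show "Q (Xs k) u < a" using t1 by simp
  qed
qed

lemma finite_null_PS:
  assumes "finite N" "N \<subseteq> {0..1}"
  shows "N \<in> null_sets PS"
proof -
  have s: "N \<in> sets PS" using assms by (auto simp: sets_PS intro: borel_closed finite_imp_closed)
  have "emeasure PS N = emeasure lborel N" using assms(2) by (rule emeasure_PS)
  also have "\<dots> = 0" using countable_imp_null_set_lborel[OF countable_finite[OF assms(1)]] by auto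
  finally show ?thesis using s by auto
qed

lemma conv_prob:
  assumes Xk: "\<And>k. fm (Xs k)" and X: "fm X"
    and wc: "\<And>t. t \<notin> X ` {0..1} \<Longrightarrow> (\<lambda>k. Fd (Xs k) t) \<longlonglongrightarrow> Fd X t"
  shows "conv_in_prob (\<lambda>k. Xst (Xs k)) (Xst X)"
  unfolding conv_in_prob_def
proof (intro allI impI)
  fix e :: real assume e: "e > 0"
  define A where "A k = {s \<in> space PS. \<bar>Xst (Xs k) s - Xst X s\<bar> \<ge> e}" for k
  have Am: "A k \<in> sets PS" for k
    unfolding A_def using Xst_meas[OF Xk[of k]] Xst_meas[OF X] by measurable
  let ?N = "insert 0 (insert 1 (Fd X ` X ` {0..1}))"
  have finN: "finite ?N" using X by (simp add: fm_def)
  have N01: "?N \<subseteq> {0..1}" using Fd_nonneg Fd_le1 by auto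
  have lim: "AE x in PS. (\<lambda>k. indicator (A k) x :: real) \<longlonglongrightarrow> 0"
  proof (rule AE_I'[OF finite_null_PS[OF finN N01]])
    show "{x \<in> space PS. \<not> (\<lambda>k. indicator (A k) x :: real) \<longlonglongrightarrow> 0} \<subseteq> ?N"
    proof
      fix x assume x: "x \<in> {x \<in> space PS. \<not> (\<lambda>k. indicator (A k) x :: real) \<longlonglongrightarrow> 0}"
      show "x \<in> ?N"
      proof (rule ccontr)
        assume xN: "x \<notin> ?N"
        have x01: "0 < x" "x < 1" using x xN by auto
        have G: "Gst x = x" using x01 by (simp add: Gst_def)
        have "(\<lambda>k. Q (Xs k) x) \<longlonglongrightarrow> Q X x" 
          by (rule Q_conv[OF Xk X wc x01]) (use xN in auto)
        then have "(\<lambda>k. Xst (Xs k) x - Xst X x) \<longlonglongrightarrow> 0"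
          unfolding Xst_def G by (simp add: LIM_zero)
        then have "eventually (\<lambda>k. norm (Xst (Xs k) x - Xst X x) < e) sequentially"
          using e by (simp add: tendsto_iff dist_real_def)
        then have "eventually (\<lambda>k. indicator (A k) x = (0::real)) sequentially"
          by (rule eventually_mono) (auto simp: A_def indicator_def)
        then have "(\<lambda>k. indicator (A k) x :: real) \<longlonglongrightarrow> 0" by (rule tendsto_eventually)
        then show False using x by simp
      qed
    qed
  qed
  have "(\<lambda>k. integral\<^sup>L PS (indicator (A k) :: real \<Rightarrow> real)) \<longlonglongrightarrow> integral\<^sup>L PS (\<lambda>x. 0::real)"
    by (rule integral_dominated_convergence[where w="\<lambda>x. 1"])
       (use Am lim finite_measure.integrable_const[OF fin_PS] in auto)
  then have "(\<lambda>k. measure PS (A k)) \<longlonglongrightarrow> 0"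
    using Am by (simp add: A_def Int_absorb2 subset_iff)
  then show "(\<lambda>k. measure PS {s \<in> space PS. e \<le> \<bar>Xst (Xs k) s - Xst X s\<bar>}) \<longlonglongrightarrow> 0"
    by (simp add: A_def)
qed

lemma cont_part:
  assumes comp: "complete_on (simpleL xl xu) R" and tr: "transitive_on (simpleL xl xu) R"
    and rb: "regret_based xl xu R" and cp: "cont_prob_pref xl xu R"
  shows "cont_dist_pref xl xu R"
  unfolding cont_dist_pref_def
proof (intro allI impI)
  fix Xs X Y
  assume Xs: "\<forall>k. Xs k \<in> simpleL xl xu" and X: "X \<in> simpleL xl xu" and Y: "Y \<in> simpleL xl xu"
    and cd: "conv_in_dist Xs X"
  have Xkf: "\<And>k. fm (Xs k)" using Xs by (auto intro: simpleL_fm)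
  have Xf: "fm X" using X by (rule simpleL_fm)
  have wc: "(\<lambda>k. Fd (Xs k) t) \<longlonglongrightarrow> Fd X t" if t: "t \<notin> X ` {0..1}" for t
  proof -
    have cX: "cdf (law X) = Fd X" using cdf_law Xf by (auto simp: fm_def)
    have cXk: "\<And>k. cdf (law (Xs k)) = Fd (Xs k)" using cdf_law Xkf by (auto simp: fm_def)
    show ?thesis using cd Fd_isCont[OF Xf t]
      unfolding conv_in_dist_def weak_conv_m_def weak_conv_def cX cXk by blast
  qed
  have cip: "conv_in_prob (\<lambda>k. Xst (Xs k)) (Xst X)" by (rule conv_prob[OF Xkf Xf wc])
  have XsS: "\<forall>k. Xst (Xs k) \<in> simpleL xl xu" using Xs Xst_simpleL by blast
  have XS: "Xst X \<in> simpleL xl xu" using X Xst_simpleL by blast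
  have ik: "\<And>k. R (Xs k) (Xst (Xs k)) \<and> R (Xst (Xs k)) (Xs k)"
    using Xst_indiff[OF comp tr rb] Xs by blast
  have iX: "R X (Xst X) \<and> R (Xst X) X" by (rule Xst_indiff[OF comp tr rb X])
  have c: "((\<forall>k. R (Xst (Xs k)) Y) \<longrightarrow> R (Xst X) Y) \<and> ((\<forall>k. R Y (Xst (Xs k))) \<longrightarrow> R Y (Xst X))"
    using cp[unfolded cont_prob_pref_def, THEN spec[where x="\<lambda>k. Xst (Xs k)"], THEN spec[where x="Xst X"], THEN spec[where x=Y]]
      XsS XS Y cip by blast
  have trr: "\<And>A B C. A \<in> simpleL xl xu \<Longrightarrow> B \<in> simpleL xl xu \<Longrightarrow> C \<in> simpleL xl xu \<Longrightarrow> R A B \<Longrightarrow> R B C \<Longrightarrow> R A C"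
    using tr unfolding transitive_on_def by blast
  show "((\<forall>k. R (Xs k) Y) \<longrightarrow> R X Y) \<and> ((\<forall>k. R Y (Xs k)) \<longrightarrow> R Y X)"
  proof (intro conjI impI)
    assume h: "\<forall>k. R (Xs k) Y"
    have "\<forall>k. R (Xst (Xs k)) Y" using h ik trr XsS Xs Y by blast
    then have "R (Xst X) Y" using c by blast
    then show "R X Y" using iX trr X XS Y by blast
  next
    assume h: "\<forall>k. R Y (Xs k)"
    have "\<forall>k. R Y (Xst (Xs k))" using h ik trr XsS Xs Y by blast
    then have "R Y (Xst X)" using c by blast
    then show "R Y X" using iX trr X XS Y by blast
  qed
qed

theorem corollary1:
  fixes xl xu :: real
    and R :: "(real \<Rightarrow> real) \<Rightarrow> (real \<Rightarrow> real) \<Rightarrow> bool"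
  assumes "complete_on (simpleL xl xu) R"
    and "transitive_on (simpleL xl xu) R"
    and "cont_prob_pref xl xu R"
    and "statewise_monotone xl xu R"
    and "regret_based xl xu R"
  shows "(\<forall>X\<in>simpleL xl xu. \<forall>Y\<in>simpleL xl xu. strict_fosd X Y \<longrightarrow> strict_pref R X Y)
         \<and> cont_dist_pref xl xu R"
  using fosd_part[OF assms(1,2,5,4)] cont_part[OF assms(1,2,5,3)] by blast


end
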